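(* Let $d\ge1$, $0<s_0<s_1$, $0<\alpha_0<\alpha_1$, $W=[s_0,s_1]\times[\alpha_0,\alpha_1]$ with interior $W^\circ$. Let $\varphi\in C^2(W^\circ,\mathbb{R})$ be non-negative and convex, with $\varphi(s,\alpha)\to\infty$ whenever $s\to s_0$, $s\to s_1$, $\alpha\to\alpha_0$ or $\alpha\to\alpha_1$, and strongly convex: there is $\theta>0$ with $\nabla^2\varphi(x)-\theta I$ positive semidefinite for all $x\in W^\circ$. For $g\in L^2_0(\mathbb{T}^d;\mathbb{C})$, $u_d\in L^2(\mathbb{T}^d;\mathbb{C})$ define $\mathcal{S}(s,\alpha)=\big(\frac{\alpha}{\alpha+|k|^{2s}}\hat g_k\big)_{k\in\mathbb{Z}^d}$ and $j(s,\alpha)=\frac{1}{2(2\pi)^d}\|\mathcal{S}(s,\alpha)-\widehat{\mathbf U}_d\|_{\ell^2}^2+\varphi(s,\alpha)$, where $\widehat{\mathbf U}_d=(\hat u_{d,k})_k$. Then, if $\|g\|_{L^2}$ and $\|u_d\|_{L^2}$ are sufficiently small, there exists a constant $\kappa>0$ such that $\nabla^2 j(s,\alpha)-\kappa I$ is positive semidefinite for all $(s,\alpha)\in W^\circ$.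
   Context: $\mathbb{T}^d=\mathbb{R}^d/(2\pi\mathbb{Z})^d$; $\hat u_k=\int_{\mathbb{T}^d}u\,e^{-ik\cdot x}dx$; convention $|0|^{2s}=0$; $L^2_0$ is the zero-mean subspace of $L^2$. "Sufficiently small" means: there is a threshold (depending on $W$, $d$ and $\theta$) such that the conclusion holds whenever both norms lie below it. *)

theory Defs
  imports "HOL-Analysis.Analysis"
begin

text \<open>The torus T^d = R^d/(2 pi Z)^d is represented by the fundamental cube [0,2 pi]^d;
  functions on the torus are functions on this cube (with Lebesgue measure).\<close>

definition torus_cube :: "(real^'d) set" where
  "torus_cube = cbox 0 (\<chi> i. 2 * pi)"

definition L2_torus :: "(real^'d \<Rightarrow> complex) \<Rightarrow> bool" where
  "L2_torus f \<longleftrightarrow> set_borel_measurable lebesgue torus_cube f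
      \<and> set_integrable lebesgue torus_cube (\<lambda>x. (cmod (f x))^2)"

definition L2_0_torus :: "(real^'d \<Rightarrow> complex) \<Rightarrow> bool" where
  "L2_0_torus f \<longleftrightarrow> L2_torus f \<and> (LINT x:torus_cube|lebesgue. f x) = 0"

definition L2_norm_torus :: "(real^'d \<Rightarrow> complex) \<Rightarrow> real" where
  "L2_norm_torus f = sqrt (LINT x:torus_cube|lebesgue. (cmod (f x))^2)"

definition lattice :: "(real^'d) set" where
  "lattice = {k. \<forall>i. k $ i \<in> \<int>}"

definition fourier_coeff :: "(real^'d \<Rightarrow> complex) \<Rightarrow> real^'d \<Rightarrow> complex" where
  "fourier_coeff f k = (LINT x:torus_cube|lebesgue. f x * exp (- \<i> * complex_of_real (k \<bullet> x)))"

text \<open>S(s,alpha)_k = alpha/(alpha+|k|^{2s}) hat g_k; note 0 powr a = 0, matching |0|^{2s}=0.\<close>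
definition S_op :: "(real^'d \<Rightarrow> complex) \<Rightarrow> real \<Rightarrow> real \<Rightarrow> real^'d \<Rightarrow> complex" where
  "S_op g s \<alpha> k = complex_of_real (\<alpha> / (\<alpha> + norm k powr (2 * s))) * fourier_coeff g k"

text \<open>j(s,alpha), with the point (s,alpha) written as x :: real^2, x$1 = s, x$2 = alpha.\<close>
definition j_fun :: "(real^'d \<Rightarrow> complex) \<Rightarrow> (real^'d \<Rightarrow> complex) \<Rightarrow> (real^2 \<Rightarrow> real) \<Rightarrow> real^2 \<Rightarrow> real" where
  "j_fun g u \<phi> x =
     1 / (2 * (2 * pi) ^ CARD('d)) *
       infsum (\<lambda>k. (cmod (S_op g (x $ 1) (x $ 2) k - fourier_coeff u k))^2) (lattice :: (real^'d) set)
     + \<phi> x"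

definition grad_hess :: "(real^2 \<Rightarrow> real) \<Rightarrow> (real^2 \<Rightarrow> real^2) \<Rightarrow> (real^2 \<Rightarrow> real^2^2) \<Rightarrow> (real^2) set \<Rightarrow> bool" where
  "grad_hess f G H S \<longleftrightarrow> (\<forall>x\<in>S. (f has_derivative (\<lambda>v. G x \<bullet> v)) (at x)
                                  \<and> (G has_derivative (\<lambda>v. H x *v v)) (at x))"

end

theory Submission
  imports Defs
begin
lemma series_deriv:
  fixes f :: "nat \<Rightarrow> 'a::real_normed_vector \<Rightarrow> 'b::banach" and F :: "nat \<Rightarrow> 'a \<Rightarrow> 'c::banach"
  assumes L: "bounded_bilinear L" and S: "open S" "convex S"
   and der: "\<And>n x. x \<in> S \<Longrightarrow> (f n has_derivative L (F n x)) (at x)"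
   and bf: "\<And>n x. x\<in>S \<Longrightarrow> norm (f n x) \<le> w n" and bF: "\<And>n x. x\<in>S \<Longrightarrow> norm (F n x) \<le> w n"
   and w: "summable w" and x: "x \<in> S"
  shows "((\<lambda>x. \<Sum>n. f n x) has_derivative L (\<Sum>n. F n x)) (at x)"
proof -
  interpret bounded_bilinear L by fact
  obtain K where K: "K > 0" "\<And>a b. norm (L a b) \<le> norm a * norm b * K" using pos_bounded by blast
  have sF: "summable (\<lambda>n. F n y)" if "y \<in> S" for y
    by (rule summable_comparison_test'[OF w]) (use bF that in auto)
  have snF: "summable (\<lambda>n. norm (F n y))" if "y \<in> S" for y
    by (rule summable_comparison_test'[OF w]) (use bF that in auto)
  have sf: "summable (\<lambda>n. f n y)" if "y \<in> S" for y
    by (rule summable_comparison_test'[OF w]) (use bf that in auto)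
  have tail: "(\<lambda>n. suminf w - (\<Sum>i<n. w i)) \<longlonglongrightarrow> 0"
    using tendsto_diff[OF tendsto_const summable_LIMSEQ[OF w], of "suminf w"] by simp
  have tb: "norm ((\<Sum>i<n. F i y) - (\<Sum>n. F n y)) \<le> suminf w - (\<Sum>i<n. w i)" if "y \<in> S" for n y
  proof -
    have "(\<Sum>i<n. F i y) - (\<Sum>n. F n y) = - (\<Sum>i. F (i + n) y)"
      using suminf_split_initial_segment[OF sF[OF that], of n] by simp
    then have "norm ((\<Sum>i<n. F i y) - (\<Sum>n. F n y)) = norm (\<Sum>i. F (i + n) y)" by simp
    also have "\<dots> \<le> (\<Sum>i. norm (F (i + n) y))"
      using summable_iff_shift[where f="\<lambda>i. norm (F i y)" and k=n] snF[OF that]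
      by (intro summable_norm) simp
    also have "\<dots> \<le> (\<Sum>i. w (i + n))"
      using summable_iff_shift[where f="\<lambda>i. norm (F i y)" and k=n] snF[OF that]
        summable_iff_shift[where f=w and k=n] w bF[OF that]
      by (intro suminf_le) simp_all
    also have "\<dots> = suminf w - (\<Sum>i<n. w i)"
      using suminf_split_initial_segment[OF w, of n] by simp
    finally show ?thesis .
  qed
  have "\<exists>g. \<forall>y\<in>S. (\<lambda>n. f n y) sums (g y) \<and> (g has_derivative (\<lambda>h. L (\<Sum>n. F n y) h)) (at y within S)"
  proof (rule has_derivative_series[OF S(2) _ _ x])
    show "(f n has_derivative L (F n y)) (at y within S)" if "y \<in> S" for n y
      using der[OF that] has_derivative_at_withinI by blast
    show "(\<lambda>n. f n x) sums (\<Sum>n. f n x)" by (rule summable_sums[OF sf[OF x]])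
    fix e :: real assume e: "e > 0"
    have eK: "e / K > 0" using e K(1) by simp
    have "\<forall>\<^sub>F n in sequentially. dist (suminf w - (\<Sum>i<n. w i)) 0 < e / K"
      using tail eK unfolding tendsto_iff by blast
    then have "\<forall>\<^sub>F n in sequentially. norm (suminf w - (\<Sum>i<n. w i)) < e / K"
      by (simp add: dist_norm)
    then show "\<forall>\<^sub>F n in sequentially. \<forall>y\<in>S. \<forall>h. norm ((\<Sum>i<n. L (F i y) h) - L (\<Sum>n. F n y) h) \<le> e * norm h"
    proof eventually_elim
      case (elim n)
      show ?case
      proof (intro ballI allI)
        fix y h assume y: "y \<in> S"
        have "norm ((\<Sum>i<n. L (F i y) h) - L (\<Sum>n. F n y) h) = norm (L ((\<Sum>i<n. F i y) - (\<Sum>n. F n y)) h)"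
          by (simp add: sum_left diff_left)
        also have "\<dots> \<le> norm ((\<Sum>i<n. F i y) - (\<Sum>n. F n y)) * norm h * K" by (rule K(2))
        also have "\<dots> \<le> (e / K) * norm h * K"
          using tb[OF y, of n] elim by (intro mult_right_mono) (auto simp: less_imp_le[OF K(1)])
        also have "\<dots> = e * norm h" using K by simp
        finally show "norm ((\<Sum>i<n. L (F i y) h) - L (\<Sum>n. F n y) h) \<le> e * norm h" .
      qed
    qed
  qed
  then obtain g where g: "\<And>y. y\<in>S \<Longrightarrow> (\<lambda>n. f n y) sums (g y) \<and> (g has_derivative (\<lambda>h. L (\<Sum>n. F n y) h)) (at y within S)"
    by blast
  have "(g has_derivative L (\<Sum>n. F n x)) (at x)"
    using g[OF x] at_within_open[OF x S(1)] by simp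
  then show ?thesis
    by (rule has_derivative_transform_within_open[OF _ S(1) x]) (use g sums_unique in auto)
qed

lemma int1d_integrable:
  "integrable lborel (\<lambda>t::real. indicator {0..2*pi} t *\<^sub>R exp (\<i> * complex_of_real (c * t)))"
proof -
  have "set_integrable lborel {0..2*pi} (\<lambda>t::real. exp (\<i> * complex_of_real (c * t)))"
    by (rule borel_integrable_atLeastAtMost') (intro continuous_intros)
  then show ?thesis by (simp add: set_integrable_def)
qed

lemma int1d:
  fixes c :: int
  shows "(LINT t|lborel. indicator {0..2*pi} t *\<^sub>R exp (\<i> * complex_of_real (of_int c * t))) = (if c = 0 then complex_of_real (2*pi) else 0)"
proof -
  have si: "set_integrable lborel {0..2*pi} (\<lambda>t::real. exp (\<i> * complex_of_real (of_int c * t)))"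
    by (rule borel_integrable_atLeastAtMost') (intro continuous_intros)
  have eq: "(LINT t|lborel. indicator {0..2*pi} t *\<^sub>R exp (\<i> * complex_of_real (of_int c * t)))
     = integral {0..2*pi} (\<lambda>t::real. exp (\<i> * complex_of_real (of_int c * t)))"
    using set_borel_integral_eq_integral(2)[OF si] by (simp add: set_lebesgue_integral_def)
  show ?thesis
  proof (cases "c = 0")
    case True
    then show ?thesis using eq by (simp add: scaleR_conv_of_real)
  next
    case False
    define F where "F = (\<lambda>z::complex. exp (\<i> * of_int c * z) / (\<i> * of_int c))"
    have d: "((\<lambda>t. F (of_real t)) has_vector_derivative exp (\<i> * complex_of_real (of_int c * t))) (at t within {0..2*pi})" for t
    proof -
      have "(F has_field_derivative exp (\<i> * of_int c * of_real t)) (at (of_real t))"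
        unfolding F_def using False
        by (auto intro!: derivative_eq_intros)
      then show ?thesis using has_vector_derivative_real_field by (simp add: mult.assoc)
    qed
    have "((\<lambda>t::real. exp (\<i> * complex_of_real (of_int c * t))) has_integral (F (of_real (2*pi)) - F (of_real 0))) {0..2*pi}"
      by (rule fundamental_theorem_of_calculus) (use d in auto)
    moreover have "F (of_real (2*pi)) = F (of_real 0)"
    proof -
      have "exp (\<i> * of_int c * of_real (2*pi)) = exp ((2 * of_int c * pi) * \<i>)"
        by (simp add: algebra_simps)
      also have "\<dots> = 1" by (rule exp_integer_2pi) simp
      finally show ?thesis unfolding F_def by simp
    qed
    ultimately show ?thesis using eq False by (simp add: integral_unique)
  qed
qed

lemma chi_inner_basis: "b \<in> Basis \<Longrightarrow> (\<chi> i. c) \<bullet> (b::real^'d) = c"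
  by (auto simp: Basis_vec_def inner_axis)

lemma lattice_inner_basis: "m \<in> lattice \<Longrightarrow> b \<in> Basis \<Longrightarrow> (m::real^'d) \<bullet> b \<in> \<int>"
  by (auto simp: Basis_vec_def inner_axis lattice_def)

lemma orth_lborel:
  fixes m :: "real^'d"
  assumes m: "m \<in> lattice"
  shows "integrable lborel (\<lambda>x. indicator torus_cube x *\<^sub>R exp (\<i> * complex_of_real (m \<bullet> x)))"
    and "integral\<^sup>L lborel (\<lambda>x. indicator torus_cube x *\<^sub>R exp (\<i> * complex_of_real (m \<bullet> x)))
       = (if m = 0 then complex_of_real ((2*pi) ^ CARD('d)) else 0)"
proof -
  interpret product_sigma_finite "\<lambda>_::real^'d. (lborel :: real measure)"
    proof qed
  define c where "c = (\<lambda>b. \<lfloor>m \<bullet> b\<rfloor>)"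
  have c: "of_int (c b) = m \<bullet> b" if "b \<in> Basis" for b
    using lattice_inner_basis[OF m that] unfolding c_def by (metis Ints_cases floor_of_int)
  define \<phi> where "\<phi> = (\<lambda>b (t::real). indicator {0..2*pi} t *\<^sub>R exp (\<i> * complex_of_real (of_int (c b) * t)))"
  define g where "g = (\<lambda>x::real^'d. indicator torus_cube x *\<^sub>R exp (\<i> * complex_of_real (m \<bullet> x)))"
  have gm: "g \<in> borel_measurable borel"
    unfolding g_def torus_cube_def by measurable
  have pt: "g (\<Sum>b\<in>Basis. f b *\<^sub>R b) = (\<Prod>b\<in>Basis. \<phi> b (f b))" for f
  proof -
    have inn: "(\<Sum>b\<in>Basis. f b *\<^sub>R b) \<bullet> b' = f b'" if "b' \<in> Basis" for b'
      using that by (simp add: inner_sum_left inner_Basis if_distrib sum.delta cong: if_cong)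
    have ind: "indicator torus_cube (\<Sum>b\<in>Basis. f b *\<^sub>R b) = (\<Prod>b\<in>Basis. indicator {0..2*pi} (f b) :: real)"
      by (auto simp: torus_cube_def mem_box inn chi_inner_basis indicator_def prod_zero_iff)
    have mi: "m \<bullet> (\<Sum>b\<in>Basis. f b *\<^sub>R b) = (\<Sum>b\<in>Basis. of_int (c b) * f b)"
      by (simp add: inner_sum_right c mult.commute)
    show ?thesis
      unfolding g_def \<phi>_def ind mi
      by (simp add: scaleR_conv_of_real prod.distrib of_real_prod sum_distrib_left exp_sum
                    ring_distribs flip: of_real_prod)
  qed
  have int\<phi>: "integrable lborel (\<phi> b)" for b
    unfolding \<phi>_def by (rule int1d_integrable)
  have Tm: "(\<lambda>f. \<Sum>b\<in>Basis. f b *\<^sub>R b) \<in> measurable (\<Pi>\<^sub>M b\<in>Basis. lborel) (borel :: (real^'d) measure)"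
    by measurable
  have "integrable (\<Pi>\<^sub>M b\<in>(Basis::(real^'d) set). lborel) (\<lambda>f. \<Prod>b\<in>Basis. \<phi> b (f b))"
    by (rule product_integrable_prod) (auto intro: int\<phi>)
  then have "integrable (\<Pi>\<^sub>M b\<in>(Basis::(real^'d) set). lborel) (\<lambda>f. g (\<Sum>b\<in>Basis. f b *\<^sub>R b))"
    by (simp add: pt)
  then show "integrable lborel (\<lambda>x. indicator torus_cube x *\<^sub>R exp (\<i> * complex_of_real (m \<bullet> x)))"
    unfolding g_def[symmetric] by (subst lborel_eq) (simp add: integrable_distr_eq[OF Tm gm])
  have "integral\<^sup>L lborel g = (\<integral>f. g (\<Sum>b\<in>Basis. f b *\<^sub>R b) \<partial>(\<Pi>\<^sub>M b\<in>(Basis::(real^'d) set). lborel))"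
    by (subst lborel_eq) (simp add: integral_distr[OF Tm gm])
  also have "\<dots> = (\<integral>f. (\<Prod>b\<in>Basis. \<phi> b (f b)) \<partial>(\<Pi>\<^sub>M b\<in>(Basis::(real^'d) set). lborel))"
    by (simp add: pt)
  also have "\<dots> = (\<Prod>b\<in>Basis. integral\<^sup>L lborel (\<phi> b))"
    by (rule product_integral_prod) (auto intro: int\<phi>)
  also have "\<dots> = (\<Prod>b\<in>(Basis::(real^'d) set). if c b = 0 then complex_of_real (2*pi) else 0)"
    by (rule prod.cong[OF refl]) (unfold \<phi>_def, rule int1d)
  also have "\<dots> = (if m = 0 then complex_of_real ((2*pi) ^ CARD('d)) else 0)"
  proof (cases "m = 0")
    case True
    then have "c b = 0" if "b \<in> Basis" for b using c[OF that] by simp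
    then show ?thesis using True by (simp add: of_real_power)
  next
    case False
    then obtain b where b: "b \<in> Basis" "m \<bullet> b \<noteq> 0" using euclidean_all_zero_iff by blast
    then have "c b \<noteq> 0" using c[OF b(1)] by auto
    then show ?thesis using False b by (auto simp: prod_zero_iff)
  qed
  finally show "integral\<^sup>L lborel (\<lambda>x. indicator torus_cube x *\<^sub>R exp (\<i> * complex_of_real (m \<bullet> x)))
       = (if m = 0 then complex_of_real ((2*pi) ^ CARD('d)) else 0)" unfolding g_def .
qed

definition NN :: "(real^'d) measure" where "NN = restrict_space lebesgue torus_cube"
definition ee :: "real^'d \<Rightarrow> real^'d \<Rightarrow> complex" where "ee k x = exp (\<i> * complex_of_real (k \<bullet> x))"

lemma cube_sets[measurable]: "torus_cube \<in> sets (lebesgue :: (real^'d) measure)"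
  unfolding torus_cube_def by simp

lemma cube_sets_lborel[measurable]: "torus_cube \<in> sets (lborel :: (real^'d) measure)"
  unfolding torus_cube_def by simp

lemma cube_sets': "torus_cube \<inter> space (lebesgue :: (real^'d) measure) \<in> sets lebesgue"
  by simp

lemma space_NN: "space NN = torus_cube"
  by (simp add: NN_def space_restrict_space)

lemma fin_NN: "finite_measure (NN :: (real^'d) measure)"
proof (rule finite_measureI)
  have "emeasure lborel (torus_cube :: (real^'d) set) < \<infinity>"
    unfolding torus_cube_def by (rule emeasure_bounded_finite) simp
  then show "emeasure (NN :: (real^'d) measure) (space NN) \<noteq> \<infinity>"
    by (simp add: NN_def space_restrict_space emeasure_restrict_space main_part[OF cube_sets_lborel])
qed

lemma integral_NN: "integral\<^sup>L NN f = (LINT x:torus_cube|lebesgue. f x)"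
  for f :: "real^'d \<Rightarrow> complex"
  by (simp add: NN_def integral_restrict_space set_lebesgue_integral_def)

lemma integral_NN_real: "integral\<^sup>L NN f = (LINT x:torus_cube|lebesgue. f x)"
  for f :: "real^'d \<Rightarrow> real"
  by (simp add: NN_def integral_restrict_space set_lebesgue_integral_def)

lemma integrable_NN: "integrable NN f \<longleftrightarrow> set_integrable lebesgue torus_cube f"
  for f :: "real^'d \<Rightarrow> 'b::{banach, second_countable_topology}"
  by (simp add: NN_def integrable_restrict_space set_integrable_def)

lemma ee_meas[measurable]: "ee k \<in> borel_measurable NN"
proof -
  have "continuous_on UNIV (ee k)" unfolding ee_def by (intro continuous_intros)
  then have "ee k \<in> borel_measurable borel" by (rule borel_measurable_continuous_onI)
  then show ?thesis unfolding NN_def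
    by (intro measurable_restrict_space1) (simp add: measurable_completion cong: measurable_cong_sets)
qed

lemma lattice_diff: "k \<in> lattice \<Longrightarrow> l \<in> lattice \<Longrightarrow> k - l \<in> lattice"
  by (auto simp: lattice_def)

lemma ee_mult_cnj: "ee k x * cnj (ee l x) = ee (k - l) x"
  by (simp add: ee_def exp_cnj inner_diff_left flip: exp_add) (simp add: algebra_simps)

lemma orth_NN:
  fixes m :: "real^'d"
  assumes m: "m \<in> lattice"
  shows "integrable NN (ee m)" "integral\<^sup>L NN (ee m) = (if m = 0 then complex_of_real ((2*pi) ^ CARD('d)) else 0)"
proof -
  have bm: "(\<lambda>x. indicator torus_cube x *\<^sub>R ee m x) \<in> borel_measurable (lborel :: (real^'d) measure)"
    unfolding ee_def by measurable
  show "integrable NN (ee m)"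
    unfolding NN_def integrable_restrict_space[OF cube_sets']
    using integrable_completion[OF bm] orth_lborel(1)[OF m] unfolding ee_def by simp
  show "integral\<^sup>L NN (ee m) = (if m = 0 then complex_of_real ((2*pi) ^ CARD('d)) else 0)"
    unfolding NN_def integral_restrict_space[OF cube_sets'] integral_completion[OF bm]
    using orth_lborel(2)[OF m] unfolding ee_def by simp
qed

lemma le_one_plus_sq: "(t::real) \<le> 1 + t^2"
proof -
  have "0 \<le> (t - 1/2)^2" by simp
  then show ?thesis by (simp add: power2_eq_square algebra_simps)
qed

lemma cnj_ee: "cnj (ee k x) = ee (-k) x"
  by (simp add: ee_def exp_cnj)

lemma cnj_ee_meas[measurable]: "(\<lambda>x. cnj (ee k x)) \<in> borel_measurable NN"
  unfolding cnj_ee by measurable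

lemma mult_cnj_sq: "z * cnj z = (complex_of_real (cmod z))^2"
  by (metis complex_norm_square of_real_power)

lemma bessel:
  fixes u :: "real^'d \<Rightarrow> complex"
  assumes u: "L2_torus u" and F: "finite F" "F \<subseteq> lattice"
  shows "(\<Sum>k\<in>F. (cmod (fourier_coeff u k))^2) \<le> (2*pi)^CARD('d) * (L2_norm_torus u)^2"
proof -
  interpret finite_measure "NN :: (real^'d) measure" by (rule fin_NN)
  define V :: real where "V = (2*pi)^CARD('d)"
  have V: "V > 0" unfolding V_def by simp
  define c where "c = (\<lambda>k. fourier_coeff u k / of_real V)"
  define P where "P = (\<lambda>x. \<Sum>k\<in>F. c k * ee k x)"
  define \<Sigma> where "\<Sigma> = (\<Sum>k\<in>F. (cmod (fourier_coeff u k))^2)"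
  have um[measurable]: "u \<in> borel_measurable NN"
    using u unfolding L2_torus_def set_borel_measurable_def NN_def
    by (subst borel_measurable_restrict_space_iff) auto
  have u2: "integrable NN (\<lambda>x. (cmod (u x))^2)"
    using u unfolding L2_torus_def integrable_NN by simp
  have bnd: "integrable NN (\<lambda>x. 1 + (cmod (u x))^2)" using u2 by simp
  have uint: "integrable NN u"
  proof (rule Bochner_Integration.integrable_bound[OF bnd])
    show "AE x in NN. norm (u x) \<le> norm (1 + (cmod (u x))^2)"
    proof (intro AE_I2)
      fix x
      have "cmod (u x) \<le> 1 + (cmod (u x))^2"
        using le_one_plus_sq by blast
      then show "norm (u x) \<le> norm (1 + (cmod (u x))^2)" by simp
    qed
  qed simp
  have ee_norm: "cmod (ee k x) = 1" for k x unfolding ee_def by simp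
  have ue: "integrable NN (\<lambda>x. u x * cnj (ee k x))" for k
    by (rule Bochner_Integration.integrable_bound[OF uint]) (measurable, auto simp: norm_mult ee_norm)
  have Fk: "integral\<^sup>L NN (\<lambda>x. u x * cnj (ee k x)) = fourier_coeff u k" for k
    unfolding integral_NN fourier_coeff_def ee_def by (simp add: exp_cnj)
  have ue': "integrable NN (\<lambda>x. u x * (a * cnj (ee k x)))" for a k
    using integrable_mult_right[OF ue[of k], of a] by (simp add: ac_simps)
  have Fk': "integral\<^sup>L NN (\<lambda>x. u x * (a * cnj (ee k x))) = a * fourier_coeff u k" for a k
    using integral_mult_right_zero[of NN a "\<lambda>x. u x * cnj (ee k x)"] Fk[of k] by (simp add: ac_simps)
  have eeint: "integrable NN (ee m)" if "m \<in> lattice" for m using orth_NN(1)[OF that] .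
  have ortho: "integral\<^sup>L NN (\<lambda>x. ee k x * cnj (ee l x)) = (if k = l then of_real V else 0)"
    if "k \<in> lattice" "l \<in> lattice" for k l :: "real^'d"
    using orth_NN(2)[OF lattice_diff[OF that]] unfolding ee_mult_cnj V_def by simp
  have cnjP: "cnj (P x) = (\<Sum>k\<in>F. cnj (c k) * cnj (ee k x))" for x
    unfolding P_def by simp
  have i1: "integrable NN (\<lambda>x. u x * cnj (P x))"
    unfolding cnjP sum_distrib_left by (intro Bochner_Integration.integrable_sum ue')
  have I1: "integral\<^sup>L NN (\<lambda>x. u x * cnj (P x)) = of_real (\<Sigma> / V)"
  proof -
    have "integral\<^sup>L NN (\<lambda>x. u x * cnj (P x)) = (\<Sum>k\<in>F. cnj (c k) * fourier_coeff u k)"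
      unfolding cnjP sum_distrib_left
      by (subst Bochner_Integration.integral_sum) (auto simp: ue' Fk')
    also have "\<dots> = (\<Sum>k\<in>F. of_real ((cmod (fourier_coeff u k))^2 / V))"
      unfolding c_def by (intro sum.cong refl) (simp add: mult_cnj_sq mult.commute)
    finally show ?thesis unfolding \<Sigma>_def by (simp add: sum_divide_distrib)
  qed
  have i2: "integrable NN (\<lambda>x. P x * cnj (u x))"
    using integrable_cnj[OF i1] by (simp add: mult.commute)
  have I2: "integral\<^sup>L NN (\<lambda>x. P x * cnj (u x)) = of_real (\<Sigma> / V)"
  proof -
    have "integral\<^sup>L NN (\<lambda>x. P x * cnj (u x)) = integral\<^sup>L NN (\<lambda>x. cnj (u x * cnj (P x)))"
      by (simp add: mult.commute)
    also have "\<dots> = cnj (integral\<^sup>L NN (\<lambda>x. u x * cnj (P x)))" by (rule Bochner_Integration.integral_cnj)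
    finally show ?thesis using I1 by simp
  qed
  have PP: "P x * cnj (P x) = (\<Sum>k\<in>F. \<Sum>l\<in>F. c k * cnj (c l) * (ee k x * cnj (ee l x)))" for x
  proof -
    have "P x * cnj (P x) = (\<Sum>k\<in>F. c k * ee k x) * (\<Sum>l\<in>F. cnj (c l) * cnj (ee l x))"
      unfolding P_def by simp
    also have "\<dots> = (\<Sum>k\<in>F. \<Sum>l\<in>F. (c k * ee k x) * (cnj (c l) * cnj (ee l x)))" by (rule sum_product)
    also have "\<dots> = (\<Sum>k\<in>F. \<Sum>l\<in>F. c k * cnj (c l) * (ee k x * cnj (ee l x)))" by (simp add: ac_simps)
    finally show ?thesis .
  qed
  have i3: "integrable NN (\<lambda>x. P x * cnj (P x))"
    unfolding PP ee_mult_cnj using F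
    by (intro Bochner_Integration.integrable_sum integrable_mult_right eeint lattice_diff) auto
  have I3: "integral\<^sup>L NN (\<lambda>x. P x * cnj (P x)) = of_real (\<Sigma> / V)"
  proof -
    have "integral\<^sup>L NN (\<lambda>x. P x * cnj (P x)) = (\<Sum>k\<in>F. \<Sum>l\<in>F. c k * cnj (c l) * integral\<^sup>L NN (\<lambda>x. ee k x * cnj (ee l x)))"
      unfolding PP using F
      by (subst Bochner_Integration.integral_sum, force simp: ee_mult_cnj intro!: Bochner_Integration.integrable_sum eeint lattice_diff)
         (intro sum.cong refl, subst Bochner_Integration.integral_sum, auto simp: ee_mult_cnj intro!: eeint lattice_diff)
    also have "\<dots> = (\<Sum>k\<in>F. \<Sum>l\<in>F. c k * cnj (c l) * (if k = l then of_real V else 0))"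
      using F by (intro sum.cong refl) (simp add: ortho subset_iff)
    also have "\<dots> = (\<Sum>k\<in>F. c k * cnj (c k) * of_real V)"
      using F(1) by (simp add: if_distrib sum.delta cong: if_cong)
    also have "\<dots> = (\<Sum>k\<in>F. of_real ((cmod (fourier_coeff u k))^2 / V))"
      unfolding c_def using V by (intro sum.cong refl) (simp add: complex_norm_square[symmetric] power2_eq_square)
    finally show ?thesis unfolding \<Sigma>_def by (simp add: sum_divide_distrib)
  qed
  have i0: "integrable NN (\<lambda>x. u x * cnj (u x))"
  proof -
    have "integrable NN (\<lambda>x. complex_of_real ((cmod (u x))^2))" using u2 by (rule integrable_of_real)
    then show ?thesis by (simp only: complex_norm_square)
  qed
  have expand: "(u x - P x) * cnj (u x - P x) = u x * cnj (u x) - u x * cnj (P x) - P x * cnj (u x) + P x * cnj (P x)" for x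
    by (simp add: algebra_simps)
  have "of_real (integral\<^sup>L NN (\<lambda>x. (cmod (u x - P x))^2)) = integral\<^sup>L NN (\<lambda>x. complex_of_real ((cmod (u x - P x))^2))"
    by (rule integral_complex_of_real[symmetric])
  also have "\<dots> = integral\<^sup>L NN (\<lambda>x. (u x - P x) * cnj (u x - P x))"
    by (simp only: complex_norm_square)
  also have "\<dots> = integral\<^sup>L NN (\<lambda>x. u x * cnj (u x)) - of_real (\<Sigma> / V)"
    unfolding expand using i0 i1 i2 i3 I1 I2 I3 by simp
  also have "integral\<^sup>L NN (\<lambda>x. u x * cnj (u x)) = integral\<^sup>L NN (\<lambda>x. complex_of_real ((cmod (u x))^2))"
    by (simp only: complex_norm_square)
  also have "\<dots> = of_real (integral\<^sup>L NN (\<lambda>x. (cmod (u x))^2))"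
    by (rule integral_complex_of_real)
  finally have eq: "integral\<^sup>L NN (\<lambda>x. (cmod (u x - P x))^2) = integral\<^sup>L NN (\<lambda>x. (cmod (u x))^2) - \<Sigma> / V"
    by (metis of_real_diff of_real_eq_iff)
  have "0 \<le> integral\<^sup>L NN (\<lambda>x. (cmod (u x - P x))^2)" by (rule integral_nonneg_AE) simp
  then have "\<Sigma> \<le> V * integral\<^sup>L NN (\<lambda>x. (cmod (u x))^2)"
    using eq V by (simp add: field_simps)
  moreover have "integral\<^sup>L NN (\<lambda>x. (cmod (u x))^2) = (L2_norm_torus u)^2"
  proof -
    have "0 \<le> integral\<^sup>L NN (\<lambda>x. (cmod (u x))^2)" by (rule integral_nonneg_AE) simp
    then show ?thesis unfolding L2_norm_torus_def integral_NN_real by simp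
  qed
  ultimately show ?thesis unfolding \<Sigma>_def V_def by simp
qed

lemma vec_nth_has_derivative[derivative_intros]:
  "((\<lambda>x. x $ i) has_derivative (\<lambda>v. v $ i)) F"
  by (rule bounded_linear.has_derivative[OF bounded_linear_vec_nth has_derivative_ident])

lemma inner2: "(x::real^2) \<bullet> y = x$1*y$1 + x$2*y$2"
  by (simp add: inner_vec_def UNIV_2)

definition EE :: "real \<Rightarrow> real^2 \<Rightarrow> real" where "EE L x = exp (2 * x$1 * L)"
definition aa :: "real \<Rightarrow> real^2 \<Rightarrow> real" where "aa L x = x$2 / (x$2 + EE L x)"
definition ga :: "real \<Rightarrow> real^2 \<Rightarrow> real^2" where
  "ga L x = vector [-2*L*x$2*EE L x/(x$2 + EE L x)^2, EE L x/(x$2 + EE L x)^2]"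

lemma EE_deriv[derivative_intros]: "(EE L has_derivative (\<lambda>v. 2 * v$1 * L * EE L x)) (at x within S)"
  unfolding EE_def by (auto intro!: derivative_eq_intros)

lemma EE_pos: "EE L x > 0" by (simp add: EE_def)

lemma aa_deriv:
  assumes "x$2 > 0"
  shows "(aa L has_derivative (\<lambda>v. ga L x \<bullet> v)) (at x)"
proof -
  have D: "x$2 + EE L x > 0" using assms EE_pos[of L x] by simp
  show ?thesis
    unfolding aa_def using D
    apply (auto intro!: derivative_eq_intros simp: fun_eq_iff inner2 ga_def)
    apply (simp add: field_simps add_pos_pos)
    apply (simp add: power2_eq_square algebra_simps)
    done
qed

lemma deriv_vec2:
  fixes G :: "real^2 \<Rightarrow> real^2"
  assumes "((\<lambda>y. G y $ 1) has_derivative (\<lambda>v. r1 \<bullet> v)) (at x)" "((\<lambda>y. G y $ 2) has_derivative (\<lambda>v. r2 \<bullet> v)) (at x)"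
  shows "(G has_derivative (\<lambda>v. (vector [r1, r2] :: real^2^2) *v v)) (at x)"
proof -
  have "((\<lambda>y. G y \<bullet> i) has_derivative (\<lambda>v. ((vector [r1, r2] :: real^2^2) *v v) \<bullet> i)) (at x)" if "i \<in> Basis" for i
  proof -
    from that obtain j where i: "i = axis j 1" by (auto simp: Basis_vec_def)
    consider "j = 1" | "j = 2" by (metis exhaust_2)
    then show ?thesis using assms by cases (auto simp: i inner_axis matrix_vector_mult_def inner2 UNIV_2 axis_def)
  qed
  then show ?thesis by (subst has_derivative_componentwise_within) auto
qed

definition Ha :: "real \<Rightarrow> real^2 \<Rightarrow> real^2^2" where
  "Ha L x = vector [
     vector [4*L^2*x$2*EE L x*(EE L x - x$2)/(x$2 + EE L x)^3, -2*L*EE L x*(EE L x - x$2)/(x$2 + EE L x)^3],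
     vector [-2*L*EE L x*(EE L x - x$2)/(x$2 + EE L x)^3, -2*EE L x/(x$2 + EE L x)^3]]"

lemma ga_deriv:
  assumes "x$2 > 0"
  shows "(ga L has_derivative (\<lambda>v. Ha L x *v v)) (at x)"
proof -
  have D: "x$2 + EE L x > 0" using assms EE_pos[of L x] by simp
  have 1: "((\<lambda>y. ga L y $ 1) has_derivative (\<lambda>v. (vector [4*L^2*x$2*EE L x*(EE L x - x$2)/(x$2 + EE L x)^3, -2*L*EE L x*(EE L x - x$2)/(x$2 + EE L x)^3] :: real^2) \<bullet> v)) (at x)"
    unfolding ga_def using D
    apply (auto intro!: derivative_eq_intros simp: fun_eq_iff inner2)
    apply (simp add: divide_simps)
    apply algebra
    done
  have 2: "((\<lambda>y. ga L y $ 2) has_derivative (\<lambda>v. (vector [-2*L*EE L x*(EE L x - x$2)/(x$2 + EE L x)^3, -2*EE L x/(x$2 + EE L x)^3] :: real^2) \<bullet> v)) (at x)"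
    unfolding ga_def using D
    apply (auto intro!: derivative_eq_intros simp: fun_eq_iff inner2)
    apply (simp add: divide_simps)
    apply algebra
    done
  show ?thesis unfolding Ha_def by (rule deriv_vec2[OF 1 2])
qed

lemma L_bound1: fixes L s0 t :: real assumes "0 \<le> L" "0 < s0" "s0 < t" shows "L * s0 \<le> exp (2*t*L)"
proof -
  have "L * s0 \<le> L * (2*t)" using assms by (intro mult_left_mono) auto
  also have "\<dots> = 2*t*L" by simp
  also have "\<dots> \<le> 1 + 2*t*L" by simp
  also have "\<dots> \<le> exp (2*t*L)" by (rule exp_ge_add_one_self)
  finally show ?thesis .
qed

lemma L_bound2: fixes L s0 t :: real assumes "0 \<le> L" "0 < s0" "s0 < t" shows "L^2 * s0^2 \<le> exp (2*t*L)"
proof -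
  have t: "0 \<le> t*L" using assms by simp
  have "L^2 * s0^2 = (L* s0)^2" by (simp add: power_mult_distrib)
  also have "\<dots> \<le> (t*L)^2" using assms by (intro power_mono) (auto simp: mult.commute mult_left_mono)
  also have "\<dots> \<le> (1 + t*L)^2" using t by (intro power_mono) auto
  also have "\<dots> \<le> (exp (t*L))^2" using t by (intro power_mono) auto
  also have "\<dots> = exp (2*t*L)" by (simp add: power2_eq_square flip: exp_add)
  finally show ?thesis .
qed

lemma prod3_le: "0 \<le> p \<Longrightarrow> 0 \<le> q \<Longrightarrow> 0 \<le> r \<Longrightarrow> p \<le> (D::real) \<Longrightarrow> q \<le> D \<Longrightarrow> r \<le> D \<Longrightarrow> p*q*r \<le> D^3"
  by (simp add: power3_eq_cube mult_mono order_trans[OF _ mult_nonneg_nonneg])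

lemma prod2_le: "0 \<le> p \<Longrightarrow> 0 \<le> q \<Longrightarrow> p \<le> (D::real) \<Longrightarrow> q \<le> D \<Longrightarrow> p*q \<le> D^2"
  by (simp add: power2_eq_square mult_mono)

lemma scal_bounds:
  fixes a E L s0 \<alpha>0 \<alpha>1 :: real
  assumes a: "\<alpha>0 \<le> a" "a \<le> \<alpha>1" "0 < \<alpha>0" and E: "0 < E" and L: "0 \<le> L" "L * s0 \<le> E" "L^2 * s0^2 \<le> E"
    and s0: "0 < s0"
  shows "\<bar>-2*L*a*E/(a+E)^2\<bar> \<le> 2*\<alpha>1/s0"
    and "\<bar>E/(a+E)^2\<bar> \<le> 1/\<alpha>0"
    and "\<bar>4*L^2*a*E*(E-a)/(a+E)^3\<bar> \<le> 4*\<alpha>1/s0^2"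
    and "\<bar>-2*L*E*(E-a)/(a+E)^3\<bar> \<le> 2/s0"
    and "\<bar>-2*E/(a+E)^3\<bar> \<le> 2/\<alpha>0^2"
    and "\<bar>a/(a+E)\<bar> \<le> 1"
proof -
  define D where "D = a + E"
  have a0: "0 < a" using a by simp
  have D: "0 < D" "a \<le> D" "E \<le> D" "\<bar>E - a\<bar> \<le> D" using a0 E unfolding D_def by auto
  have Ls: "0 \<le> L * s0" using L s0 by simp
  have Ls2: "0 \<le> L^2 * s0^2" by simp
  show "\<bar>a/(a+E)\<bar> \<le> 1" using D a0 unfolding D_def[symmetric] by simp
  show "\<bar>-2*L*a*E/(a+E)^2\<bar> \<le> 2*\<alpha>1/s0"
  proof -
    have h: "(L * s0)*E \<le> D^2" using Ls E D L by (intro prod2_le) auto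
    have LsE: "0 \<le> (L * s0)*E" using Ls E by simp
    have "2*a*((L * s0)*E) \<le> 2*\<alpha>1*D^2" by (rule mult_mono[OF _ h _ LsE]) (use a a0 in auto)
    then have "2*L*a*E* s0 \<le> 2*\<alpha>1*D^2" by (simp add: algebra_simps)
    then have "2*L*a*E/D^2 \<le> 2*\<alpha>1/s0" using D s0 by (simp add: field_simps)
    moreover have "\<bar>2*L*a*E\<bar> = 2*L*a*E" using L a0 E by simp
    ultimately show ?thesis unfolding D_def by (simp add: abs_divide)
  qed
  show "\<bar>E/(a+E)^2\<bar> \<le> 1/\<alpha>0"
  proof -
    have "E*a \<le> D^2" using E a0 D by (intro prod2_le) auto
    moreover have "E*\<alpha>0 \<le> E*a" using E a by simp
    ultimately have "E*\<alpha>0 \<le> D^2" by linarith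
    then have "E/D^2 \<le> 1/\<alpha>0" using D a by (simp add: field_simps)
    then show ?thesis using E unfolding D_def by simp
  qed
  show "\<bar>4*L^2*a*E*(E-a)/(a+E)^3\<bar> \<le> 4*\<alpha>1/s0^2"
  proof -
    have h: "(L^2* s0^2)*E*\<bar>E-a\<bar> \<le> D^3" using Ls2 E D L by (intro prod3_le) auto
    have nn: "0 \<le> (L^2* s0^2)*E*\<bar>E-a\<bar>" using E by simp
    have "4*a*((L^2* s0^2)*E*\<bar>E-a\<bar>) \<le> 4*\<alpha>1*D^3" by (rule mult_mono[OF _ h _ nn]) (use a a0 in auto)
    moreover have "\<bar>4*L^2*a*E*(E-a)\<bar>* s0^2 = 4*a*((L^2* s0^2)*E*\<bar>E-a\<bar>)"
      using a0 E L by (simp add: abs_mult power2_eq_square mult_ac) (simp add: abs_if)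
    ultimately have "\<bar>4*L^2*a*E*(E-a)\<bar>* s0^2 \<le> 4*\<alpha>1*D^3" by linarith
    then have "\<bar>4*L^2*a*E*(E-a)\<bar>/D^3 \<le> 4*\<alpha>1/s0^2" using D s0 by (simp add: field_simps)
    then show ?thesis using D unfolding D_def by (simp add: abs_divide)
  qed
  show "\<bar>-2*L*E*(E-a)/(a+E)^3\<bar> \<le> 2/s0"
  proof -
    have "(L* s0)*E*\<bar>E-a\<bar> \<le> D^3" using Ls E D L by (intro prod3_le) auto
    moreover have "\<bar>-2*L*E*(E-a)\<bar>* s0 = 2*((L* s0)*E*\<bar>E-a\<bar>)"
      using L E s0 by (simp add: abs_mult mult_ac) (simp add: abs_if)
    ultimately have "\<bar>-2*L*E*(E-a)\<bar>* s0 \<le> 2*D^3" by linarith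
    then have "\<bar>-2*L*E*(E-a)\<bar>/D^3 \<le> 2/s0" using D s0 by (simp add: field_simps)
    then show ?thesis using D unfolding D_def by (simp add: abs_divide)
  qed
  show "\<bar>-2*E/(a+E)^3\<bar> \<le> 2/\<alpha>0^2"
  proof -
    have "E*a*a \<le> D^3" using E a0 D by (intro prod3_le) auto
    moreover have "E*(\<alpha>0*\<alpha>0) \<le> E*(a*a)" using E a by (intro mult_left_mono mult_mono) auto
    ultimately have "2*E*\<alpha>0^2 \<le> 2*D^3" by (simp add: power2_eq_square algebra_simps)
    then have "2*E/D^3 \<le> 2/\<alpha>0^2" using D a by (simp add: field_simps)
    then show ?thesis using D E unfolding D_def by (simp add: abs_divide)
  qed
qed

lemma norm2_le: "norm (v::real^2) \<le> \<bar>v$1\<bar> + \<bar>v$2\<bar>"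
  using norm_le_l1_cart[of v] by (simp add: UNIV_2)

lemma norm22_le: "norm (M::real^2^2) \<le> norm (M$1) + norm (M$2)"
proof -
  have "norm M \<le> (\<Sum>i\<in>UNIV. norm (M$i))"
    unfolding norm_vec_def by (rule L2_set_le_sum) simp
  then show ?thesis by (simp add: UNIV_2)
qed

definition outer :: "real^2 \<Rightarrow> real^2^2" where "outer g = (\<chi> i j. g$i * g$j)"

lemma outer_mv: "outer g *v v = (g \<bullet> v) *\<^sub>R g"
  by (simp add: outer_def vec_eq_iff matrix_vector_mult_def inner2 UNIV_2 algebra_simps)

lemma norm_outer: "norm (outer g) \<le> (\<bar>g$1\<bar> + \<bar>g$2\<bar>) * norm g"
proof -
  have r: "outer g $ i = g$i *\<^sub>R g" for i by (simp add: outer_def vec_eq_iff)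
  show ?thesis using norm22_le[of "outer g"] by (simp add: r algebra_simps)
qed

definition qf :: "real \<Rightarrow> real \<Rightarrow> real \<Rightarrow> real \<Rightarrow> real^2 \<Rightarrow> real" where
  "qf A B C L x = A * (aa L x)^2 + B * aa L x + C"
definition qg :: "real \<Rightarrow> real \<Rightarrow> real \<Rightarrow> real \<Rightarrow> real^2 \<Rightarrow> real^2" where
  "qg A B C L x = (2*A*aa L x + B) *\<^sub>R ga L x"
definition qh :: "real \<Rightarrow> real \<Rightarrow> real \<Rightarrow> real \<Rightarrow> real^2 \<Rightarrow> real^2^2" where
  "qh A B C L x = (2*A*aa L x + B) *\<^sub>R Ha L x + (2*A) *\<^sub>R outer (ga L x)"

lemma qf_deriv: assumes "x$2 > 0" shows "(qf A B C L has_derivative (\<lambda>v. qg A B C L x \<bullet> v)) (at x)"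
proof -
  note d = aa_deriv[OF assms, of L]
  show ?thesis unfolding qf_def qg_def
    by (auto intro!: derivative_eq_intros d simp: fun_eq_iff algebra_simps power2_eq_square)
qed

lemma qg_deriv: assumes "x$2 > 0" shows "(qg A B C L has_derivative (\<lambda>v. qh A B C L x *v v)) (at x)"
proof -
  note d = aa_deriv[OF assms, of L]
  note d2 = ga_deriv[OF assms, of L]
  have "((\<lambda>y. (2*A*aa L y + B) *\<^sub>R ga L y) has_derivative
          (\<lambda>v. (2*A*aa L x + B) *\<^sub>R (Ha L x *v v) + (2*A*(ga L x \<bullet> v)) *\<^sub>R ga L x)) (at x)"
    by (rule has_derivative_scaleR[OF _ d2, THEN has_derivative_eq_rhs])
       (auto intro!: derivative_eq_intros d simp: fun_eq_iff)
  then show ?thesis unfolding qg_def qh_def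
    by (simp add: algebra_simps outer_mv scaleR_matrix_vector_assoc[symmetric])
qed

definition Kc :: "real \<Rightarrow> real \<Rightarrow> real \<Rightarrow> real" where
  "Kc s0 \<alpha>0 \<alpha>1 = 2*\<alpha>1/s0 + 1/\<alpha>0 + 4*\<alpha>1/s0^2 + 2/s0 + 2/\<alpha>0^2"

lemma box_bounds:
  fixes x :: "real^2"
  assumes x: "s0 < x$1" "\<alpha>0 < x$2" "x$2 < \<alpha>1" and p: "0 < s0" "0 < \<alpha>0" and L: "0 \<le> L"
  shows "\<bar>aa L x\<bar> \<le> 1" "norm (ga L x) \<le> 2 * Kc s0 \<alpha>0 \<alpha>1" "norm (Ha L x) \<le> 4 * Kc s0 \<alpha>0 \<alpha>1"
    "\<bar>ga L x $ 1\<bar> + \<bar>ga L x $ 2\<bar> \<le> 2 * Kc s0 \<alpha>0 \<alpha>1" "0 \<le> Kc s0 \<alpha>0 \<alpha>1"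
proof -
  define K where "K = Kc s0 \<alpha>0 \<alpha>1"
  have E1: "L * s0 \<le> EE L x" unfolding EE_def using L_bound1[OF L p(1) x(1)] .
  have E2: "L^2 * s0^2 \<le> EE L x" unfolding EE_def using L_bound2[OF L p(1) x(1)] .
  note sb = scal_bounds[of \<alpha>0 "x$2" \<alpha>1 "EE L x" L s0, OF _ _ p(2) EE_pos L E1 E2 p(1)]
  have a1: "\<alpha>0 \<le> x$2" "x$2 \<le> \<alpha>1" using x by auto
  note sb = sb[OF a1]
  have t: "0 \<le> 2*\<alpha>1/s0" "0 \<le> 1/\<alpha>0" "0 \<le> 4*\<alpha>1/s0^2" "0 \<le> 2/s0" "0 \<le> 2/\<alpha>0^2"
    using x p by auto
  show K0: "0 \<le> Kc s0 \<alpha>0 \<alpha>1" using t unfolding Kc_def by linarith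
  show "\<bar>aa L x\<bar> \<le> 1" unfolding aa_def using sb(6) .
  have "ga L x $ 1 = -2*L*x$2*EE L x/(x$2 + EE L x)^2" by (simp add: ga_def)
  then have g1: "\<bar>ga L x $ 1\<bar> \<le> K" unfolding K_def Kc_def using sb(1) t by linarith
  have "ga L x $ 2 = EE L x/(x$2 + EE L x)^2" by (simp add: ga_def)
  then have g2: "\<bar>ga L x $ 2\<bar> \<le> K" unfolding K_def Kc_def using sb(2) t by linarith
  show "\<bar>ga L x $ 1\<bar> + \<bar>ga L x $ 2\<bar> \<le> 2 * Kc s0 \<alpha>0 \<alpha>1" using g1 g2 K_def by linarith
  show "norm (ga L x) \<le> 2 * Kc s0 \<alpha>0 \<alpha>1" using norm2_le[of "ga L x"] g1 g2 K_def by linarith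
  have h: "\<bar>Ha L x $ i $ j\<bar> \<le> K" for i j
  proof -
    consider "i = 1" "j = 1" | "i = 1" "j = 2" | "i = 2" "j = 1" | "i = 2" "j = 2"
      by (metis exhaust_2)
    then show ?thesis
    proof cases
      case 1
      then have "Ha L x $ i $ j = 4*L^2*x$2*EE L x*(EE L x - x$2)/(x$2 + EE L x)^3" by (simp add: Ha_def)
      then show ?thesis unfolding K_def Kc_def using sb(3) t by linarith
    next
      case 2
      then have "Ha L x $ i $ j = -2*L*EE L x*(EE L x - x$2)/(x$2 + EE L x)^3" by (simp add: Ha_def)
      then show ?thesis unfolding K_def Kc_def using sb(4) t by linarith
    next
      case 3
      then have "Ha L x $ i $ j = -2*L*EE L x*(EE L x - x$2)/(x$2 + EE L x)^3" by (simp add: Ha_def)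
      then show ?thesis unfolding K_def Kc_def using sb(4) t by linarith
    next
      case 4
      then have "Ha L x $ i $ j = -2*EE L x/(x$2 + EE L x)^3" by (simp add: Ha_def)
      then show ?thesis unfolding K_def Kc_def using sb(5) t by linarith
    qed
  qed
  have "norm (Ha L x $ i) \<le> 2*K" for i
    using norm2_le[of "Ha L x $ i"] h[of i 1] h[of i 2] by linarith
  then show "norm (Ha L x) \<le> 4 * Kc s0 \<alpha>0 \<alpha>1"
    using norm22_le[of "Ha L x"] K_def by (smt (verit))
qed

definition Mc :: "real \<Rightarrow> real \<Rightarrow> real \<Rightarrow> real" where
  "Mc s0 \<alpha>0 \<alpha>1 = 1 + 8 * Kc s0 \<alpha>0 \<alpha>1 + 8 * (Kc s0 \<alpha>0 \<alpha>1)^2"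

lemma q_bounds:
  fixes x :: "real^2"
  assumes x: "s0 < x$1" "\<alpha>0 < x$2" "x$2 < \<alpha>1" and p: "0 < s0" "0 < \<alpha>0" and L: "0 \<le> L"
  shows "norm (qf A B C L x) \<le> Mc s0 \<alpha>0 \<alpha>1 * (\<bar>A\<bar> + \<bar>B\<bar> + \<bar>C\<bar>)"
    "norm (qg A B C L x) \<le> Mc s0 \<alpha>0 \<alpha>1 * (\<bar>A\<bar> + \<bar>B\<bar> + \<bar>C\<bar>)"
    "norm (qh A B C L x) \<le> Mc s0 \<alpha>0 \<alpha>1 * (\<bar>A\<bar> + \<bar>B\<bar> + \<bar>C\<bar>)"
proof -
  define K where "K = Kc s0 \<alpha>0 \<alpha>1"
  define a where "a = aa L x"
  define S where "S = \<bar>A\<bar> + \<bar>B\<bar> + \<bar>C\<bar>"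
  note bb = box_bounds[OF x p L]
  have a: "\<bar>a\<bar> \<le> 1" using bb(1) a_def by simp
  have K: "0 \<le> K" using bb(5) K_def by simp
  have S: "0 \<le> S" unfolding S_def by simp
  have M: "Mc s0 \<alpha>0 \<alpha>1 = 1 + 8*K + 8*K^2" unfolding Mc_def K_def ..
  have c: "\<bar>2*A*a + B\<bar> \<le> 2*\<bar>A\<bar> + \<bar>B\<bar>"
  proof -
    have "\<bar>A*a\<bar> \<le> \<bar>A\<bar>" using a by (simp add: abs_mult mult_left_le)
    then show ?thesis by linarith
  qed
  have a2: "\<bar>a^2\<bar> \<le> 1"
  proof -
    have "\<bar>a\<bar>^2 \<le> 1" by (rule power_le_one[OF abs_ge_zero a])
    then show ?thesis by simp
  qed
  have "\<bar>A * a^2\<bar> \<le> \<bar>A\<bar>" using a2 by (simp add: abs_mult mult_left_le)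
  moreover have "\<bar>B * a\<bar> \<le> \<bar>B\<bar>" using a by (simp add: abs_mult mult_left_le)
  ultimately have "norm (qf A B C L x) \<le> S" unfolding qf_def a_def[symmetric] S_def by simp
  also have "S \<le> Mc s0 \<alpha>0 \<alpha>1 * S" using S K unfolding M by (simp add: mult_le_cancel_right1 add_nonneg_nonneg)
  finally show "norm (qf A B C L x) \<le> Mc s0 \<alpha>0 \<alpha>1 * (\<bar>A\<bar> + \<bar>B\<bar> + \<bar>C\<bar>)" unfolding S_def .
  have ng: "norm (ga L x) \<le> 2*K" using bb(2) K_def by simp
  have "norm (qg A B C L x) = \<bar>2*A*a + B\<bar> * norm (ga L x)" unfolding qg_def a_def by simp
  also have "\<dots> \<le> (2*\<bar>A\<bar> + \<bar>B\<bar>) * (2*K)" using c ng by (intro mult_mono) auto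
  also have "\<dots> \<le> (1 + 8*K + 8*K^2) * S" unfolding S_def using K
    by (simp add: algebra_simps power2_eq_square)
  finally show "norm (qg A B C L x) \<le> Mc s0 \<alpha>0 \<alpha>1 * (\<bar>A\<bar> + \<bar>B\<bar> + \<bar>C\<bar>)" unfolding M S_def .
  have nH: "norm (Ha L x) \<le> 4*K" using bb(3) K_def by simp
  have no: "norm (outer (ga L x)) \<le> 4*K^2"
  proof -
    have "norm (outer (ga L x)) \<le> (\<bar>ga L x $ 1\<bar> + \<bar>ga L x $ 2\<bar>) * norm (ga L x)" by (rule norm_outer)
    also have "\<dots> \<le> (2*K) * (2*K)" using bb(4) ng K_def by (intro mult_mono) auto
    finally show ?thesis by (simp add: power2_eq_square)
  qed
  have "norm (qh A B C L x) \<le> \<bar>2*A*a + B\<bar> * norm (Ha L x) + \<bar>2*A\<bar> * norm (outer (ga L x))"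
    unfolding qh_def a_def[symmetric] by (rule order_trans[OF norm_triangle_ineq]) simp
  also have "\<dots> \<le> (2*\<bar>A\<bar> + \<bar>B\<bar>) * (4*K) + (2*\<bar>A\<bar>) * (4*K^2)"
    using c nH no by (intro add_mono mult_mono) auto
  also have "\<dots> \<le> (1 + 8*K + 8*K^2) * S" unfolding S_def using K
    by (simp add: algebra_simps power2_eq_square)
  finally show "norm (qh A B C L x) \<le> Mc s0 \<alpha>0 \<alpha>1 * (\<bar>A\<bar> + \<bar>B\<bar> + \<bar>C\<bar>)" unfolding M S_def .
qed

lemma bb_mv: "bounded_bilinear ((*v) :: real^2^2 \<Rightarrow> real^2 \<Rightarrow> real^2)"
proof -
  have "bilinear ((*v) :: real^2^2 \<Rightarrow> real^2 \<Rightarrow> real^2)"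
    unfolding bilinear_def
    by (auto intro!: linearI simp: matrix_vector_mul_linear matrix_vector_right_distrib
        matrix_vector_mult_scaleR matrix_vector_mult_add_rdistrib scaleR_matrix_vector_assoc)
  then show ?thesis by (simp add: bilinear_conv_bounded_bilinear)
qed

lemma mv_bound: "\<bar>v \<bullet> ((M::real^2^2) *v v)\<bar> \<le> 4 * norm M * (v \<bullet> v)"
proof -
  have "\<bar>v \<bullet> (M *v v)\<bar> \<le> norm v * norm (M *v v)" by (rule Cauchy_Schwarz_ineq2)
  also have "norm (M *v v) \<le> onorm ((*v) M) * norm v"
    by (rule onorm[OF matrix_vector_mul_bounded_linear])
  also have "onorm ((*v) M) \<le> (\<Sum>i\<in>UNIV. \<Sum>j\<in>UNIV. \<bar>M $ i $ j\<bar>)"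
    by (rule onorm_le_matrix_component_sum)
  also have "\<dots> \<le> 4 * norm M"
  proof -
    have h: "\<bar>M $ i $ j\<bar> \<le> norm M" for i j
      using component_le_norm_cart[of "M$i" j] Finite_Cartesian_Product.norm_nth_le[of M i] by linarith
    show ?thesis using h[of 1 1] h[of 1 2] h[of 2 1] h[of 2 2] by (simp add: UNIV_2)
  qed
  finally have "\<bar>v \<bullet> (M *v v)\<bar> \<le> norm v * ((4 * norm M) * norm v)"
    by (simp add: mult_left_mono mult_right_mono)
  then show ?thesis by (simp add: dot_square_norm power2_eq_square algebra_simps)
qed

lemma lattice_countable: "countable (lattice :: (real^'d) set)"
proof -
  have "lattice \<subseteq> range (\<lambda>f::'d \<Rightarrow> int. \<chi> i. of_int (f i) :: real^'d)"
  proof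
    fix k :: "real^'d" assume "k \<in> lattice"
    then have "\<forall>i. \<exists>z::int. k$i = of_int z" unfolding lattice_def by (auto elim!: Ints_cases)
    then obtain f where "\<And>i. k$i = of_int (f i)" by metis
    then have "k = (\<chi> i. of_int (f i))" by (simp add: vec_eq_iff)
    then show "k \<in> range (\<lambda>f::'d \<Rightarrow> int. \<chi> i. of_int (f i) :: real^'d)" by blast
  qed
  then show ?thesis by (rule countable_subset) simp
qed

lemma lattice_infinite: "infinite (lattice :: (real^'d) set)"
proof
  assume fin: "finite (lattice :: (real^'d) set)"
  have "range (\<lambda>n::nat. (\<chi> i. of_nat n) :: real^'d) \<subseteq> lattice"
    by (auto simp: lattice_def)
  moreover have "inj (\<lambda>n::nat. (\<chi> i. of_nat n) :: real^'d)"
    by (auto intro!: injI simp: vec_eq_iff)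
  ultimately have "finite (UNIV :: nat set)"
    using finite_imageD fin finite_subset by blast
  then show False by simp
qed

lemma lattice_norm: "k \<in> lattice \<Longrightarrow> k \<noteq> 0 \<Longrightarrow> 1 \<le> norm (k :: real^'d)"
proof -
  assume k: "k \<in> lattice" "k \<noteq> 0"
  then obtain i where i: "k$i \<noteq> 0" by (auto simp: vec_eq_iff)
  have "k$i \<in> \<int>" using k unfolding lattice_def by auto
  then have "1 \<le> \<bar>k$i\<bar>" using i by (rule Ints_nonzero_abs_ge1)
  also have "\<dots> \<le> norm k" by (rule component_le_norm_cart)
  finally show ?thesis .
qed

lemma lattice_ln: "k \<in> lattice \<Longrightarrow> 0 \<le> ln (norm (k :: real^'d))"
  using lattice_norm[of k] by (cases "k = 0") auto

lemma fc_zero: "L2_0_torus g \<Longrightarrow> fourier_coeff g 0 = 0"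
  unfolding L2_0_torus_def fourier_coeff_def by simp

lemma cmod_expand: "(cmod (complex_of_real t * z - w))^2 = (cmod z)^2 * t^2 + (-2 * Re (z * cnj w)) * t + (cmod w)^2"
  by (simp only: cmod_power2) (simp add: power2_eq_square algebra_simps)

lemma S_op_eq:
  fixes x :: "real^2"
  assumes g: "L2_0_torus g" and k: "k \<in> lattice" and x2: "0 < x$2"
  shows "S_op g (x$1) (x$2) k = complex_of_real (aa (ln (norm k)) x) * fourier_coeff g k"
proof (cases "k = 0")
  case True then show ?thesis using fc_zero[OF g] by (simp add: S_op_def)
next
  case False
  then have "norm k powr (2 * x$1) = EE (ln (norm k)) x"
    by (simp add: powr_def EE_def mult_ac)
  then show ?thesis by (simp add: S_op_def aa_def)
qed

lemma term_eq:
  fixes x :: "real^2" and k :: "real^'d"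
  assumes g: "L2_0_torus g" and k: "k \<in> lattice" and x2: "0 < x$2"
  shows "(cmod (S_op g (x$1) (x$2) k - fourier_coeff u k))^2
     = qf ((cmod (fourier_coeff g k))^2) (-2 * Re (fourier_coeff g k * cnj (fourier_coeff u k))) ((cmod (fourier_coeff u k))^2) (ln (norm k)) x"
  unfolding S_op_eq[OF g k x2] cmod_expand qf_def by (simp add: mult_ac)

lemma abc_bound: "\<bar>(cmod z)^2\<bar> + \<bar>-2 * Re (z * cnj w)\<bar> + \<bar>(cmod w)^2\<bar> \<le> 2 * ((cmod z)^2 + (cmod w)^2)"
proof -
  have "\<bar>Re (z * cnj w)\<bar> \<le> cmod z * cmod w"
    using abs_Re_le_cmod[of "z * cnj w"] by (simp add: norm_mult)
  moreover have "2 * (cmod z * cmod w) \<le> (cmod z)^2 + (cmod w)^2"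
    using sum_squares_bound[of "cmod z" "cmod w"] by simp
  ultimately show ?thesis by simp
qed

lemma bessel_seq:
  fixes u :: "real^'d \<Rightarrow> complex" and e :: "nat \<Rightarrow> real^'d"
  assumes u: "L2_torus u" and e: "bij_betw e UNIV lattice"
  shows "summable (\<lambda>n. (cmod (fourier_coeff u (e n)))^2)"
    "(\<Sum>n. (cmod (fourier_coeff u (e n)))^2) \<le> (2*pi)^CARD('d) * (L2_norm_torus u)^2"
proof -
  have ps: "(\<Sum>i<n. (cmod (fourier_coeff u (e i)))^2) \<le> (2*pi)^CARD('d) * (L2_norm_torus u)^2" for n
  proof -
    have inj: "inj_on e {..<n}" using e by (auto simp: bij_betw_def intro: inj_on_subset)
    have "(\<Sum>i<n. (cmod (fourier_coeff u (e i)))^2) = (\<Sum>k\<in>e ` {..<n}. (cmod (fourier_coeff u k))^2)"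
      by (simp add: sum.reindex[OF inj])
    also have "\<dots> \<le> (2*pi)^CARD('d) * (L2_norm_torus u)^2"
      by (rule bessel[OF u]) (use e in \<open>auto simp: bij_betw_def\<close>)
    finally show ?thesis .
  qed
  show s: "summable (\<lambda>n. (cmod (fourier_coeff u (e n)))^2)"
    by (rule summableI_nonneg_bounded[OF _ ps]) simp
  show "(\<Sum>n. (cmod (fourier_coeff u (e n)))^2) \<le> (2*pi)^CARD('d) * (L2_norm_torus u)^2"
    by (rule suminf_le_const[OF s ps])
qed

theorem lemma4:
  fixes s0 s1 \<alpha>0 \<alpha>1 \<theta> :: real
  assumes "0 < s0" "s0 < s1" "0 < \<alpha>0" "\<alpha>0 < \<alpha>1" "0 < \<theta>"
  shows "\<exists>\<delta>>0. \<forall>(\<phi> :: real^2 \<Rightarrow> real) G H.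
     (grad_hess \<phi> G H (box (vector [s0, \<alpha>0]) (vector [s1, \<alpha>1]))
      \<and> continuous_on (box (vector [s0, \<alpha>0]) (vector [s1, \<alpha>1])) H
      \<and> (\<forall>x\<in>box (vector [s0, \<alpha>0]) (vector [s1, \<alpha>1]). 0 \<le> \<phi> x)
      \<and> convex_on (box (vector [s0, \<alpha>0]) (vector [s1, \<alpha>1])) \<phi>
      \<and> (\<forall>x0 \<in> cbox (vector [s0, \<alpha>0]) (vector [s1, \<alpha>1]) - box (vector [s0, \<alpha>0]) (vector [s1, \<alpha>1]).
            filterlim \<phi> at_top (at x0 within box (vector [s0, \<alpha>0]) (vector [s1, \<alpha>1])))
      \<and> (\<forall>x\<in>box (vector [s0, \<alpha>0]) (vector [s1, \<alpha>1]). \<forall>v. v \<bullet> (H x *v v) - \<theta> * (v \<bullet> v) \<ge> 0))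
     \<longrightarrow> (\<forall>(g :: real^'d \<Rightarrow> complex) (u :: real^'d \<Rightarrow> complex).
           L2_0_torus g \<and> L2_torus u \<and> L2_norm_torus g < \<delta> \<and> L2_norm_torus u < \<delta>
           \<longrightarrow> (\<exists>\<kappa>>0. \<exists>Gj Hj. grad_hess (j_fun g u \<phi>) Gj Hj (box (vector [s0, \<alpha>0]) (vector [s1, \<alpha>1]))
                 \<and> (\<forall>x\<in>box (vector [s0, \<alpha>0]) (vector [s1, \<alpha>1]). \<forall>v. v \<bullet> (Hj x *v v) - \<kappa> * (v \<bullet> v) \<ge> 0)))"
proof -
  note ps = assms
  define B where "B = (box (vector [s0, \<alpha>0]) (vector [s1, \<alpha>1]) :: (real^2) set)"
  have memB: "x \<in> B \<longleftrightarrow> s0 < x$1 \<and> x$1 < s1 \<and> \<alpha>0 < x$2 \<and> x$2 < \<alpha>1" for x :: "real^2"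
    unfolding B_def mem_box_cart forall_2 by simp
  have oB: "open B" and cB: "convex B" unfolding B_def by (simp_all add: open_box convex_box)
  define M0 where "M0 = Mc s0 \<alpha>0 \<alpha>1"
  have K0: "0 \<le> Kc s0 \<alpha>0 \<alpha>1" unfolding Kc_def using ps by simp
  have M0: "1 \<le> M0" unfolding M0_def Mc_def using K0 by simp
  define \<delta> where "\<delta> = min 1 (\<theta> / (16 * M0))"
  have \<delta>: "0 < \<delta>" "\<delta> \<le> 1" "\<delta> \<le> \<theta> / (16 * M0)" unfolding \<delta>_def using ps M0 by auto
  have main: "\<exists>\<kappa>>0. \<exists>Gj Hj. grad_hess (j_fun g u \<phi>) Gj Hj B \<and> (\<forall>x\<in>B. \<forall>v. v \<bullet> (Hj x *v v) - \<kappa> * (v \<bullet> v) \<ge> 0)"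
    if h\<phi>: "grad_hess \<phi> G H B" and hH: "\<forall>x\<in>B. \<forall>v. v \<bullet> (H x *v v) - \<theta> * (v \<bullet> v) \<ge> 0"
      and g: "L2_0_torus g" and u: "L2_torus u" and gd: "L2_norm_torus g < \<delta>" and ud: "L2_norm_torus u < \<delta>"
    for \<phi> G H and g u :: "real^'d \<Rightarrow> complex"
  proof -
    have gL2: "L2_torus g" using g unfolding L2_0_torus_def by simp
    obtain e :: "nat \<Rightarrow> real^'d" where e: "bij_betw e UNIV (lattice :: (real^'d) set)"
      using bij_betw_from_nat_into[OF lattice_countable[where 'd='d] lattice_infinite[where 'd='d]] by blast
    have eL: "e n \<in> lattice" for n using e by (auto simp: bij_betw_def)
    define V :: real where "V = (2*pi)^CARD('d)"
    have V: "0 < V" unfolding V_def by simp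
    define c :: real where "c = 1 / (2 * V)"
    have c: "0 < c" unfolding c_def using V by simp
    define gh where "gh n = fourier_coeff g (e n)" for n
    define uh where "uh n = fourier_coeff u (e n)" for n
    define An where "An n = (cmod (gh n))^2" for n
    define Bn where "Bn n = -2 * Re (gh n * cnj (uh n))" for n
    define Cn where "Cn n = (cmod (uh n))^2" for n
    define Ln where "Ln n = ln (norm (e n))" for n
    define f where "f n = qf (An n) (Bn n) (Cn n) (Ln n)" for n
    define fg where "fg n = qg (An n) (Bn n) (Cn n) (Ln n)" for n
    define fh where "fh n = qh (An n) (Bn n) (Cn n) (Ln n)" for n
    define w where "w n = M0 * (2 * ((cmod (gh n))^2 + (cmod (uh n))^2))" for n
    have Ln0: "0 \<le> Ln n" for n unfolding Ln_def by (rule lattice_ln[OF eL])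
    note bg = bessel_seq[OF gL2 e] and bu = bessel_seq[OF u e]
    have sg: "summable (\<lambda>n. (cmod (gh n))^2)" using bg(1) unfolding gh_def .
    have su: "summable (\<lambda>n. (cmod (uh n))^2)" using bu(1) unfolding uh_def .
    have sw: "summable w" unfolding w_def by (intro summable_mult summable_add sg su)
    have W: "suminf w \<le> 2 * M0 * V * ((L2_norm_torus g)^2 + (L2_norm_torus u)^2)"
    proof -
      have s2: "summable (\<lambda>n. (cmod (gh n))^2 + (cmod (uh n))^2)" by (rule summable_add[OF sg su])
      have "suminf w = M0 * (\<Sum>n. 2 * ((cmod (gh n))^2 + (cmod (uh n))^2))"
        unfolding w_def by (rule suminf_mult[OF summable_mult[OF s2]])
      also have "\<dots> = M0 * (2 * (\<Sum>n. (cmod (gh n))^2 + (cmod (uh n))^2))"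
        using suminf_mult[OF s2, of 2] by simp
      also have "(\<Sum>n. (cmod (gh n))^2 + (cmod (uh n))^2) = (\<Sum>n. (cmod (gh n))^2) + (\<Sum>n. (cmod (uh n))^2)"
        by (rule suminf_add[OF sg su, symmetric])
      also have "M0 * (2 * ((\<Sum>n. (cmod (gh n))^2) + (\<Sum>n. (cmod (uh n))^2))) \<le> M0 * (2 * (V * (L2_norm_torus g)^2 + V * (L2_norm_torus u)^2))"
        using bg(2) bu(2) M0 unfolding gh_def uh_def V_def by (intro mult_left_mono add_mono) auto
      finally show ?thesis by (simp add: algebra_simps)
    qed
    have wb: "Mc s0 \<alpha>0 \<alpha>1 * (\<bar>An n\<bar> + \<bar>Bn n\<bar> + \<bar>Cn n\<bar>) \<le> w n" for n
      unfolding w_def M0_def[symmetric] An_def Bn_def Cn_def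
      using abc_bound[of "gh n" "uh n"] M0 by (intro mult_left_mono) auto
    have xB: "s0 < x$1" "\<alpha>0 < x$2" "x$2 < \<alpha>1" "0 < x$2" if "x \<in> B" for x
      using that ps unfolding memB by auto
    have bf: "norm (f n x) \<le> w n" if "x \<in> B" for n x
      using q_bounds(1)[OF xB(1-3)[OF that] ps(1) ps(3) Ln0] wb unfolding f_def by (meson order_trans)
    have bfg: "norm (fg n x) \<le> w n" if "x \<in> B" for n x
      using q_bounds(2)[OF xB(1-3)[OF that] ps(1) ps(3) Ln0] wb unfolding fg_def by (meson order_trans)
    have bfh: "norm (fh n x) \<le> w n" if "x \<in> B" for n x
      using q_bounds(3)[OF xB(1-3)[OF that] ps(1) ps(3) Ln0] wb unfolding fh_def by (meson order_trans)
    have df: "(f n has_derivative (\<bullet>) (fg n x)) (at x)" if "x \<in> B" for n x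
      unfolding f_def fg_def using qf_deriv[OF xB(4)[OF that]] by simp
    have dfg: "(fg n has_derivative (*v) (fh n x)) (at x)" if "x \<in> B" for n x
      unfolding fg_def fh_def using qg_deriv[OF xB(4)[OF that]] by simp
    define D where "D x = (\<Sum>n. f n x)" for x
    define GD where "GD x = (\<Sum>n. fg n x)" for x
    define HD where "HD x = (\<Sum>n. fh n x)" for x
    have dD: "(D has_derivative (\<bullet>) (GD x)) (at x)" if "x \<in> B" for x
      unfolding D_def GD_def
      by (rule series_deriv[OF bounded_bilinear_inner oB cB df bf bfg sw that])
    have dGD: "(GD has_derivative (*v) (HD x)) (at x)" if "x \<in> B" for x
      unfolding GD_def HD_def
      by (rule series_deriv[OF bb_mv oB cB dfg bfg bfh sw that])
    have nHD: "norm (HD x) \<le> suminf w" if "x \<in> B" for x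
    proof -
      have s: "summable (\<lambda>n. norm (fh n x))"
        by (rule summable_comparison_test'[OF sw]) (use bfh[OF that] in auto)
      have "norm (HD x) \<le> (\<Sum>n. norm (fh n x))" unfolding HD_def by (rule summable_norm[OF s])
      also have "\<dots> \<le> suminf w" by (rule suminf_le[OF _ s sw]) (use bfh[OF that] in auto)
      finally show ?thesis .
    qed
    have jeq: "j_fun g u \<phi> y = c * D y + \<phi> y" if "y \<in> B" for y
    proof -
      have te: "(cmod (S_op g (y$1) (y$2) (e n) - fourier_coeff u (e n)))^2 = f n y" for n
        unfolding f_def An_def Bn_def Cn_def Ln_def gh_def uh_def
        by (rule term_eq[OF g eL xB(4)[OF that]])
      have "infsum (\<lambda>k. (cmod (S_op g (y$1) (y$2) k - fourier_coeff u k))^2) lattice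
          = infsum (\<lambda>n. (cmod (S_op g (y$1) (y$2) (e n) - fourier_coeff u (e n)))^2) UNIV"
        by (rule infsum_reindex_bij_betw[OF e, symmetric])
      also have "\<dots> = infsum (\<lambda>n. f n y) UNIV" by (simp add: te)
      also have "\<dots> = D y"
      proof -
        have s: "summable (\<lambda>n. f n y)"
          by (rule summable_comparison_test'[OF sw]) (use bf[OF that] in auto)
        have "0 \<le> f n y" for n using te[of n, symmetric] by simp
        then have "((\<lambda>n. f n y) has_sum D y) UNIV"
          using sums_nonneg_imp_has_sum[OF summable_sums[OF s]] unfolding D_def by blast
        then show ?thesis by (rule infsumI)
      qed
      finally show ?thesis unfolding j_fun_def c_def V_def by simp
    qed
    define Gj where "Gj y = c *\<^sub>R GD y + G y" for y
    define Hj where "Hj y = c *\<^sub>R HD y + H y" for y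
    have gh: "grad_hess (j_fun g u \<phi>) Gj Hj B"
      unfolding grad_hess_def
    proof (intro ballI conjI)
      fix x assume x: "x \<in> B"
      have dphi: "(\<phi> has_derivative (\<lambda>v. G x \<bullet> v)) (at x)" "(G has_derivative (\<lambda>v. H x *v v)) (at x)"
        using h\<phi> x unfolding grad_hess_def by auto
      have "((\<lambda>y. c * D y + \<phi> y) has_derivative (\<lambda>v. Gj x \<bullet> v)) (at x)"
        using dD[OF x] dphi(1)
        by (auto intro!: derivative_eq_intros simp: Gj_def inner_add_left)
      then show "(j_fun g u \<phi> has_derivative (\<lambda>v. Gj x \<bullet> v)) (at x)"
        by (rule has_derivative_transform_within_open[OF _ oB x]) (simp add: jeq)
      show "(Gj has_derivative (\<lambda>v. Hj x *v v)) (at x)"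
        unfolding Gj_def Hj_def using dGD[OF x] dphi(2)
        by (auto intro!: derivative_eq_intros simp: matrix_vector_mult_add_rdistrib scaleR_matrix_vector_assoc)
    qed
    have small: "c * (4 * suminf w) \<le> \<theta> / 2"
    proof -
      have i0: "0 \<le> (LINT x:torus_cube|lebesgue. (cmod (h x))^2)" for h :: "real^'d \<Rightarrow> complex"
        unfolding integral_NN_real[symmetric] by (rule integral_nonneg_AE) simp
      have ng: "0 \<le> L2_norm_torus g" "0 \<le> L2_norm_torus u" unfolding L2_norm_torus_def using i0 by simp_all
      have "(L2_norm_torus g)^2 \<le> \<delta>^2" "(L2_norm_torus u)^2 \<le> \<delta>^2"
        using gd ud ng by (auto intro!: power_mono)
      moreover have "\<delta>^2 \<le> \<delta>" using \<delta> by (simp add: power2_eq_square mult_left_le)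
      ultimately have "(L2_norm_torus g)^2 + (L2_norm_torus u)^2 \<le> 2 * (\<theta> / (16 * M0))"
        using \<delta> by linarith
      then have "2 * M0 * V * ((L2_norm_torus g)^2 + (L2_norm_torus u)^2) \<le> 2 * M0 * V * (2 * (\<theta> / (16 * M0)))"
        using M0 V by (intro mult_left_mono) auto
      then have "suminf w \<le> 2 * M0 * V * (2 * (\<theta> / (16 * M0)))"
        using W by linarith
      then have "4 * suminf w \<le> V * \<theta>" using M0 by (simp add: field_simps)
      then show ?thesis unfolding c_def using V by (simp add: field_simps)
    qed
    have pos: "\<forall>x\<in>B. \<forall>v. v \<bullet> (Hj x *v v) - \<theta>/2 * (v \<bullet> v) \<ge> 0"
    proof (intro ballI allI)
      fix x v assume x: "x \<in> B"
      have e1: "v \<bullet> (Hj x *v v) = c * (v \<bullet> (HD x *v v)) + v \<bullet> (H x *v v)"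
        unfolding Hj_def by (simp add: matrix_vector_mult_add_rdistrib scaleR_matrix_vector_assoc[symmetric] inner_add_right)
      have "\<bar>v \<bullet> (HD x *v v)\<bar> \<le> 4 * norm (HD x) * (v \<bullet> v)" by (rule mv_bound)
      also have "\<dots> \<le> 4 * suminf w * (v \<bullet> v)"
        using nHD[OF x] by (intro mult_right_mono) auto
      finally have "c * \<bar>v \<bullet> (HD x *v v)\<bar> \<le> c * (4 * suminf w) * (v \<bullet> v)"
        using c by (simp add: mult_left_mono mult.assoc)
      also have "\<dots> \<le> \<theta> / 2 * (v \<bullet> v)" using small by (intro mult_right_mono) auto
      finally have a1: "c * \<bar>v \<bullet> (HD x *v v)\<bar> \<le> \<theta> / 2 * (v \<bullet> v)" .
      have a2: "- (c * \<bar>v \<bullet> (HD x *v v)\<bar>) \<le> c * (v \<bullet> (HD x *v v))"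
      proof -
        have "c * (- \<bar>v \<bullet> (HD x *v v)\<bar>) \<le> c * (v \<bullet> (HD x *v v))"
          by (rule mult_left_mono) (use c in auto)
        then show ?thesis by simp
      qed
      have a3: "\<theta> * (v \<bullet> v) \<le> v \<bullet> (H x *v v)" using hH x by auto
      show "v \<bullet> (Hj x *v v) - \<theta>/2 * (v \<bullet> v) \<ge> 0" unfolding e1 using a1 a2 a3 by linarith
    qed
    show ?thesis using gh pos ps(5) by (intro exI[of _ "\<theta>/2"]) auto
  qed
  show ?thesis
    apply (rule exI[of _ \<delta>])
    using \<delta>(1) main unfolding B_def by blast
qed

end
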